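(* Every analytic map $\phi:B_E\to B_E$ induces a bounded composition operator $C_\phi:\mathcal B(B_E)\to \mathcal B(B_E)$, $C_\phi f=f\circ\phi$.
   Context: $E$ is a complex Hilbert space of arbitrary dimension with open unit ball $B_E$. The Bloch space $\mathcal B(B_E)$ is the space of analytic $f:B_E\to\mathbb C$ with $\|f\|_{\mathcal B(B_E)}=\sup_{x\in B_E}(1-\|x\|^2)\|f'(x)\|<\infty$, endowed with the norm $\|f\|_{Bloch(B_E)}=|f(0)|+\|f\|_{inv}$, where $\|f\|_{inv}=\sup_{x\in B_E}\|\nabla(f\circ\varphi_x)(0)\|$ is an equivalent seminorm; here $\nabla g(x)\in E$ is the vector with $g'(x)(y)=\langle y,\overline{\nabla g(x)}\rangle$ (conjugation taken coordinatewise in a fixed orthonormal basis), and $\varphi_a(y)=(s_aQ_a+P_a)\big(\frac{a-y}{1-\langle y,a\rangle}\big)$ is the Möbius automorphism of $B_E$, with $s_a=\sqrt{1-\|a\|^2}$, $P_a$ the orthogonal projection onto $\mathbb C a$ and $Q_a=I-P_a$. *)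

theory Defs
  imports "HOL-Analysis.Analysis"
begin

text \<open>The library has only real inner product spaces. A complex Hilbert space is a
real Hilbert space (with inner product Re of the complex one) together with a
complex scalar multiplication extending the real one, for which the norm is
absolutely homogeneous.\<close>

class chilbert = real_inner + complete_space +
  fixes scaleC :: "complex \<Rightarrow> 'a \<Rightarrow> 'a"
  assumes scaleC_add_right: "scaleC c (x + y) = scaleC c x + scaleC c y"
    and scaleC_add_left: "scaleC (b + c) x = scaleC b x + scaleC c x"
    and scaleC_scaleC: "scaleC b (scaleC c x) = scaleC (b * c) x"
    and scaleC_of_real: "scaleC (complex_of_real r) x = scaleR r x"
    and norm_scaleC: "norm (scaleC c x) = cmod c * norm x"

text \<open>Complex inner product, linear in the first argument, with Re = real inner product.\<close>
definition cinner :: "'a::chilbert \<Rightarrow> 'a \<Rightarrow> complex" where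
  "cinner x y = Complex (x \<bullet> y) (scaleC (- \<i>) x \<bullet> y)"

definition unit_ball :: "'a::chilbert set" where
  "unit_ball = ball 0 1"

definition clinear_functional :: "('a::chilbert \<Rightarrow> complex) \<Rightarrow> bool" where
  "clinear_functional L \<longleftrightarrow> bounded_linear L \<and> (\<forall>c y. L (scaleC c y) = c * L y)"

definition clinear_map :: "('a::chilbert \<Rightarrow> 'b::chilbert) \<Rightarrow> bool" where
  "clinear_map L \<longleftrightarrow> bounded_linear L \<and> (\<forall>c y. L (scaleC c y) = scaleC c (L y))"

definition analytic_fun :: "('a::chilbert \<Rightarrow> complex) \<Rightarrow> bool" where
  "analytic_fun f \<longleftrightarrow>
     (\<forall>x\<in>unit_ball. \<exists>L. clinear_functional L \<and> (f has_derivative L) (at x))"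

definition analytic_self_map :: "('a::chilbert \<Rightarrow> 'a) \<Rightarrow> bool" where
  "analytic_self_map \<phi> \<longleftrightarrow> \<phi> ` unit_ball \<subseteq> unit_ball \<and>
     (\<forall>x\<in>unit_ball. \<exists>L. clinear_map L \<and> (\<phi> has_derivative L) (at x))"

definition fderiv :: "('a::chilbert \<Rightarrow> complex) \<Rightarrow> 'a \<Rightarrow> ('a \<Rightarrow> complex)" where
  "fderiv f x = (SOME L. (f has_derivative L) (at x))"

definition proj_line :: "'a::chilbert \<Rightarrow> 'a \<Rightarrow> 'a" where
  "proj_line a z = scaleC (cinner z a / complex_of_real ((norm a)\<^sup>2)) a"

definition mobius :: "'a::chilbert \<Rightarrow> 'a \<Rightarrow> 'a" where
  "mobius a y =
     (let z = scaleC (1 / (1 - cinner y a)) (a - y)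
      in scaleR (sqrt (1 - (norm a)\<^sup>2)) (z - proj_line a z) + proj_line a z)"

text \<open>Bloch seminorm, Bloch space and the norm |f(0)| + ||f||_inv.
  Note ||nabla g(0)|| equals the operator norm of g'(0) (Riesz).\<close>
definition bloch_seminorm :: "('a::chilbert \<Rightarrow> complex) \<Rightarrow> real" where
  "bloch_seminorm f = (SUP x\<in>unit_ball. (1 - (norm x)\<^sup>2) * onorm (fderiv f x))"

definition bloch_space :: "('a::chilbert \<Rightarrow> complex) set" where
  "bloch_space = {f. analytic_fun f \<and>
      bdd_above ((\<lambda>x. (1 - (norm x)\<^sup>2) * onorm (fderiv f x)) ` unit_ball)}"

definition inv_seminorm :: "('a::chilbert \<Rightarrow> complex) \<Rightarrow> real" where
  "inv_seminorm f = (SUP x\<in>unit_ball. onorm (fderiv (f \<circ> mobius x) 0))"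

definition bloch_norm :: "('a::chilbert \<Rightarrow> complex) \<Rightarrow> real" where
  "bloch_norm f = cmod (f 0) + inv_seminorm f"

end

theory Submission
  imports Defs "HOL-Complex_Analysis.Complex_Analysis"
begin


definition J :: "'a::chilbert \<Rightarrow> 'a" where "J x = scaleC \<i> x"

lemma scaleC_zero_right[simp]: "scaleC c (0::'a::chilbert) = 0"
  by (metis add_cancel_right_right scaleC_add_right)
lemma scaleC_zero_left[simp]: "scaleC 0 (x::'a::chilbert) = 0"
  by (metis scaleC_of_real of_real_0 scale_zero_left)
lemma scaleC_one[simp]: "scaleC 1 (x::'a::chilbert) = x"
  by (metis scaleC_of_real of_real_1 scale_one)
lemma scaleC_minus_right: "scaleC c (- x::'a::chilbert) = - scaleC c x"
  by (metis add.right_inverse add_cancel_right_left eq_neg_iff_add_eq_0 scaleC_add_right scaleC_zero_right)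
lemma scaleC_diff_right: "scaleC c (x - y::'a::chilbert) = scaleC c x - scaleC c y"
  by (metis diff_conv_add_uminus scaleC_add_right scaleC_minus_right)
lemma scaleC_minus_left: "scaleC (- c) (x::'a::chilbert) = - scaleC c x"
  by (metis add.right_inverse add_cancel_right_left eq_neg_iff_add_eq_0 scaleC_add_left scaleC_zero_left)
lemma scaleC_diff_left: "scaleC (b - c) (x::'a::chilbert) = scaleC b x - scaleC c x"
  by (metis diff_conv_add_uminus scaleC_add_left scaleC_minus_left)
lemma scaleC_scaleR_comm: "scaleC c (scaleR r x) = scaleR r (scaleC c (x::'a::chilbert))"
  by (metis scaleC_of_real scaleC_scaleC mult.commute)
lemma scaleC_of_real_mult: "scaleC (complex_of_real r * c) x = scaleR r (scaleC c (x::'a::chilbert))"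
  by (metis scaleC_of_real scaleC_scaleC)

lemma scaleC_decomp: "scaleC c (x::'a::chilbert) = scaleR (Re c) x + scaleR (Im c) (J x)"
proof -
  have "c = complex_of_real (Re c) + complex_of_real (Im c) * \<i>"
    by (simp add: complex_eq_iff)
  then have "scaleC c x = scaleC (complex_of_real (Re c)) x + scaleC (complex_of_real (Im c) * \<i>) x"
    by (metis scaleC_add_left)
  then show ?thesis by (simp add: scaleC_of_real scaleC_of_real_mult J_def)
qed

lemma J_add: "J (x + y) = J x + J (y::'a::chilbert)" unfolding J_def by (rule scaleC_add_right)
lemma J_scaleR: "J (scaleR r x) = scaleR r (J (x::'a::chilbert))" unfolding J_def by (rule scaleC_scaleR_comm)
lemma J_J[simp]: "J (J (x::'a::chilbert)) = - x"
  unfolding J_def by (metis scaleC_scaleC complex_i_mult_minus scaleC_minus_left scaleC_one)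
lemma norm_J[simp]: "norm (J (x::'a::chilbert)) = norm x"
  by (simp add: norm_scaleC J_def)
lemma inner_J_J[simp]: "J x \<bullet> J (y::'a::chilbert) = x \<bullet> y"
proof -
  have "norm (J (x+y))^2 = norm (x+y)^2" by simp
  then have e: "(J x + J y) \<bullet> (J x + J y) = (x+y) \<bullet> (x+y)"
    by (simp add: J_add power2_norm_eq_inner)
  have "J x \<bullet> J x = x \<bullet> x" "J y \<bullet> J y = y \<bullet> y"
    by (metis norm_J power2_norm_eq_inner)+
  with e show ?thesis
    by (simp add: inner_add_left inner_add_right inner_commute)
qed
lemma inner_J_left: "J x \<bullet> (y::'a::chilbert) = - (x \<bullet> J y)"
  by (metis J_J inner_J_J inner_minus_left)
lemma inner_J_self[simp]: "J x \<bullet> (x::'a::chilbert) = 0"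
  by (metis inner_J_left inner_commute neg_equal_zero)
lemma inner_J_self2[simp]: "x \<bullet> J (x::'a::chilbert) = 0"
  by (metis inner_commute inner_J_self)

lemma J_zero[simp]: "J 0 = (0::'a::chilbert)" unfolding J_def by simp
lemma J_minus: "J (- x) = - J (x::'a::chilbert)" unfolding J_def by (rule scaleC_minus_right)
lemma J_diff: "J (x - y) = J x - J (y::'a::chilbert)" unfolding J_def by (rule scaleC_diff_right)

lemma cinner_alt: "cinner x (y::'a::chilbert) = Complex (x \<bullet> y) (x \<bullet> J y)"
proof -
  have "scaleC (- \<i>) x = - J x" unfolding J_def by (rule scaleC_minus_left)
  then show ?thesis unfolding cinner_def by (simp add: inner_J_left)
qed
lemma Re_cinner[simp]: "Re (cinner x (y::'a::chilbert)) = x \<bullet> y" by (simp add: cinner_alt)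
lemma Im_cinner[simp]: "Im (cinner x (y::'a::chilbert)) = x \<bullet> J y" by (simp add: cinner_alt)

lemma cinner_add_left: "cinner (x + y) (z::'a::chilbert) = cinner x z + cinner y z"
  by (simp add: complex_eq_iff inner_add_left)
lemma cinner_add_right: "cinner x (y + z::'a::chilbert) = cinner x y + cinner x z"
  by (simp add: complex_eq_iff inner_add_right J_add)
lemma cinner_diff_left: "cinner (x - y) (z::'a::chilbert) = cinner x z - cinner y z"
  by (simp add: complex_eq_iff inner_diff_left)
lemma cinner_diff_right: "cinner x (y - z::'a::chilbert) = cinner x y - cinner x z"
  by (simp add: complex_eq_iff inner_diff_right J_diff)
lemma cinner_scaleC_left: "cinner (scaleC c x) (y::'a::chilbert) = c * cinner x y"
  by (simp add: complex_eq_iff scaleC_decomp inner_add_left inner_J_left J_add J_scaleR)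
lemma cinner_scaleC_right: "cinner x (scaleC c y::'a::chilbert) = cnj c * cinner x y"
  by (simp add: complex_eq_iff scaleC_decomp inner_add_right inner_diff_right inner_J_left J_add J_scaleR)
lemma cinner_commute: "cinner y (x::'a::chilbert) = cnj (cinner x y)"
  using inner_J_left[of x y] inner_commute[of y "J x"] inner_commute[of x y] by (simp add: complex_eq_iff)
lemma cinner_self: "cinner x (x::'a::chilbert) = complex_of_real ((norm x)^2)"
  by (simp add: complex_eq_iff power2_norm_eq_inner)
lemma cinner_zero_right[simp]: "cinner x (0::'a::chilbert) = 0"
  by (simp add: complex_eq_iff)
lemma cinner_zero_left[simp]: "cinner 0 (x::'a::chilbert) = 0"
  by (simp add: complex_eq_iff)



lemma cinner_scaleR_left: "cinner (scaleR r x) (y::'a::chilbert) = complex_of_real r * cinner x y"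
  by (metis cinner_scaleC_left scaleC_of_real)
lemma cinner_minus_left: "cinner (- x) (y::'a::chilbert) = - cinner x y"
  by (metis cinner_scaleC_left scaleC_minus_left scaleC_one mult_minus_left mult_1)

lemma proj_scaleC: "proj_line a (scaleC c z) = scaleC c (proj_line a (z::'a::chilbert))"
  unfolding proj_line_def by (simp add: cinner_scaleC_left scaleC_scaleC)
lemma proj_add: "proj_line a (x + y) = proj_line a x + proj_line a (y::'a::chilbert)"
  unfolding proj_line_def by (simp add: cinner_add_left add_divide_distrib scaleC_add_left)
lemma proj_diff: "proj_line a (x - y) = proj_line a x - proj_line a (y::'a::chilbert)"
  unfolding proj_line_def by (simp add: cinner_diff_left diff_divide_distrib scaleC_diff_left)
lemma proj_minus: "proj_line a (- x) = - proj_line a (x::'a::chilbert)"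
  unfolding proj_line_def by (simp add: cinner_minus_left scaleC_minus_left)
lemma proj_zero[simp]: "proj_line a 0 = (0::'a::chilbert)"
  unfolding proj_line_def by simp
lemma proj_zero_left[simp]: "proj_line 0 x = (0::'a::chilbert)"
  unfolding proj_line_def by simp
lemma proj_self[simp]: "proj_line a a = (a::'a::chilbert)"
proof (cases "a = 0")
  case False
  then have "cinner a a / complex_of_real ((norm a)\<^sup>2) = 1"
    by (simp add: cinner_self)
  then show ?thesis unfolding proj_line_def by simp
qed simp
lemma cinner_proj: "cinner (proj_line a z) a = cinner z (a::'a::chilbert)"
proof (cases "a = 0")
  case False
  then show ?thesis unfolding proj_line_def by (simp add: cinner_scaleC_left cinner_self)
qed simp
lemma cinner_Q: "cinner (z - proj_line a z) (a::'a::chilbert) = 0"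
  by (simp add: cinner_diff_left cinner_proj)
lemma proj_orth: "cinner w a = 0 \<Longrightarrow> proj_line a w = (0::'a::chilbert)"
  unfolding proj_line_def by simp
lemma cinner_orth_scaleC: "cinner w a = 0 \<Longrightarrow> cinner w (scaleC c a) = (0::complex)"
  "cinner w a = 0 \<Longrightarrow> cinner (scaleC c w) (a::'a::chilbert) = 0"
  by (simp_all add: cinner_scaleC_right cinner_scaleC_left)

lemma orth_norm: assumes "cinner w u = 0"
  shows "(norm (u + w))^2 = (norm u)^2 + (norm (w::'a::chilbert))^2"
proof -
  have "w \<bullet> u = 0" using assms Re_cinner by (metis zero_complex.sel(1))
  then show ?thesis by (simp add: power2_norm_eq_inner inner_add_left inner_add_right inner_commute)
qed

lemma norm_proj_eq: "proj_line a y = scaleC (cinner y a / complex_of_real ((norm a)^2)) (a::'a::chilbert)"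
  by (simp add: proj_line_def)

lemma norm_decomp: "(norm (y::'a::chilbert))^2 = (norm (proj_line a y))^2 + (norm (y - proj_line a y))^2"
proof -
  have "cinner (y - proj_line a y) (proj_line a y) = 0"
    apply (subst (2) norm_proj_eq)
    by (simp add: cinner_scaleC_right cinner_Q)
  from orth_norm[OF this] show ?thesis by simp
qed

lemma norm_proj_le: "norm (proj_line a y) \<le> norm (y::'a::chilbert)"
  using norm_decomp[of y a] by (metis le_add_same_cancel1 norm_ge_zero power2_le_imp_le zero_le_power2)
lemma norm_Q_le: "norm (y - proj_line a y) \<le> norm (y::'a::chilbert)"
  using norm_decomp[of y a] by (metis le_add_same_cancel2 norm_ge_zero power2_le_imp_le zero_le_power2)

lemma cinner_cs: "cmod (cinner y (a::'a::chilbert)) \<le> norm y * norm a"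
proof (cases "a = 0")
  case False
  have "cinner y a = cinner (proj_line a y) a" by (simp add: cinner_proj)
  also have "\<dots> = (cinner y a / complex_of_real ((norm a)\<^sup>2)) * complex_of_real ((norm a)\<^sup>2)"
    unfolding proj_line_def by (simp add: cinner_scaleC_left cinner_self)
  finally have "cmod (cinner y a) = norm (proj_line a y) * norm a"
    using False unfolding proj_line_def by (simp add: norm_scaleC norm_divide norm_mult power2_eq_square)
  then show ?thesis using norm_proj_le[of a y] by (simp add: mult_right_mono)
qed simp

lemma mobius_expand: "mobius a y = scaleC (1 / (1 - cinner y a))
    (a - proj_line a y - scaleR (sqrt (1 - (norm a)^2)) (y - proj_line a (y::'a::chilbert)))"
proof -
  define k where "k = 1 / (1 - cinner y a)"
  define s where "s = sqrt (1 - (norm a)^2)"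
  define z where "z = scaleC k (a - y)"
  have Pz: "proj_line a z = scaleC k (a - proj_line a y)"
    by (simp add: z_def proj_scaleC proj_diff)
  have Qz: "z - proj_line a z = scaleC k (proj_line a y - y)"
  proof -
    have "z - proj_line a z = scaleC k (a - y) - scaleC k (a - proj_line a y)"
      using Pz z_def by simp
    also have "\<dots> = scaleC k ((a - y) - (a - proj_line a y))"
      by (rule scaleC_diff_right[symmetric])
    finally show ?thesis by simp
  qed
  have "mobius a y = scaleR s (z - proj_line a z) + proj_line a z"
    unfolding mobius_def by (simp add: Let_def z_def k_def s_def)
  also have "\<dots> = scaleC k (scaleR s (proj_line a y - y) + (a - proj_line a y))"
    by (simp only: Qz) (simp add: Pz scaleC_add_right scaleC_scaleR_comm)
  also have "scaleR s (proj_line a y - y) + (a - proj_line a y) = a - proj_line a y - scaleR s (y - proj_line a y)"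
    by (simp add: algebra_simps)
  finally show ?thesis by (simp add: k_def s_def)
qed

lemma mobius_zero: "mobius a 0 = (a::'a::chilbert)"
  by (simp add: mobius_expand)
lemma mobius_self: "mobius a a = (0::'a::chilbert)"
  by (simp add: mobius_expand)

lemma mobius_coord:
  assumes w: "cinner w a = 0"
  shows "mobius a (scaleC \<alpha> a + w) =
    scaleC ((1 - \<alpha>) / (1 - \<alpha> * complex_of_real ((norm a)^2))) a
    + scaleC (- complex_of_real (sqrt (1 - (norm a)^2)) / (1 - \<alpha> * complex_of_real ((norm a)^2))) (w::'a::chilbert)"
proof -
  define d where "d = 1 - \<alpha> * complex_of_real ((norm a)^2)"
  define s where "s = sqrt (1 - (norm a)^2)"
  have ci: "cinner (scaleC \<alpha> a + w) a = \<alpha> * complex_of_real ((norm a)^2)"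
    using w by (simp add: cinner_add_left cinner_scaleC_left cinner_self)
  have Py: "proj_line a (scaleC \<alpha> a + w) = scaleC \<alpha> a"
    using w by (simp add: proj_add proj_scaleC proj_orth)
  have "mobius a (scaleC \<alpha> a + w) = scaleC (1/d) (a - scaleC \<alpha> a - scaleR s w)"
    unfolding mobius_expand ci Py by (simp add: d_def s_def)
  also have "\<dots> = scaleC ((1 - \<alpha>)/d) a + scaleC (- complex_of_real s / d) w"
  proof -
    have "a - scaleC \<alpha> a - scaleR s w = scaleC (1 - \<alpha>) a + scaleC (- complex_of_real s) w"
      by (simp add: scaleC_diff_left scaleC_minus_left scaleC_of_real)
    then show ?thesis
      by (simp add: scaleC_add_right scaleC_scaleC)
  qed
  finally show ?thesis by (simp add: d_def s_def)
qed



lemma decomp: "(y::'a::chilbert) = scaleC (cinner y a / complex_of_real ((norm a)^2)) a + (y - proj_line a y)"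
  by (simp add: proj_line_def)

lemma cinner_decomp: "cinner (y::'a::chilbert) a = (cinner y a / complex_of_real ((norm a)^2)) * complex_of_real ((norm a)^2)"
  by (cases "a = 0") simp_all

lemma norm_sq_decomp: "(norm (y::'a::chilbert))^2 = (cmod (cinner y a / complex_of_real ((norm a)^2)))^2 * (norm a)^2 + (norm (y - proj_line a y))^2"
  using norm_decomp[of y a] by (simp add: proj_line_def norm_scaleC power_mult_distrib)

lemma mult_less_one: "0 \<le> x \<Longrightarrow> x < 1 \<Longrightarrow> 0 \<le> y \<Longrightarrow> y < 1 \<Longrightarrow> (x::real) * y < 1"
  by (metis mult_le_one less_le mult_less_cancel_right2 mult_eq_1 order.strict_iff_not)

lemma mobius_denom_nz: "norm (a::'a::chilbert) < 1 \<Longrightarrow> norm y < 1 \<Longrightarrow> 1 - cinner y a \<noteq> 0"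
proof
  assume "norm a < 1" "norm y < 1" "1 - cinner y a = 0"
  then have "cinner y a = 1" by simp
  moreover have "norm y * norm a < 1"
    using \<open>norm a < 1\<close> \<open>norm y < 1\<close> by (simp add: mult_less_one)
  ultimately show False using cinner_cs[of y a] by simp
qed


lemma key_ineq:
  fixes x t n W :: real
  assumes "0 \<le> n" "n < 1" "0 \<le> W" "(x^2 + t^2) * n + W < 1"
  shows "((1-x)^2 + t^2) * n + (1 - n) * W < (1 - x*n)^2 + (t*n)^2"
proof -
  have "(1 - x*n)^2 + (t*n)^2 - (((1-x)^2 + t^2) * n + (1 - n) * W) = (1-n) * (1 - (x^2+t^2)*n - W)"
    by (simp add: algebra_simps power2_eq_square)
  moreover have "(1-n) * (1 - (x^2+t^2)*n - W) > 0" using assms by simp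
  ultimately show ?thesis by linarith
qed

lemma mobius_in_ball:
  assumes a: "norm (a::'a::chilbert) < 1" and y: "norm y < 1"
  shows "norm (mobius a y) < 1"
proof -
  define n where "n = (norm a)^2"
  define \<alpha> where "\<alpha> = cinner y a / complex_of_real n"
  define w where "w = y - proj_line a y"
  define d where "d = 1 - \<alpha> * complex_of_real n"
  define s where "s = sqrt (1 - n)"
  have n: "0 \<le> n" "n < 1" using a by (auto simp: n_def power_less_one_iff abs_less_iff)
  have w: "cinner w a = 0" by (simp add: w_def cinner_Q)
  have yd: "y = scaleC \<alpha> a + w" using decomp[of y a] by (simp add: \<alpha>_def w_def n_def)
  have d: "d = 1 - cinner y a" using cinner_decomp[of y a] by (simp add: d_def \<alpha>_def n_def)
  have dnz: "d \<noteq> 0" using mobius_denom_nz[OF a y] d by simp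
  have ny: "(cmod \<alpha>)^2 * n + (norm w)^2 < 1"
  proof -
    have "(norm y)^2 < 1" using y by (simp add: abs_square_less_1)
    then show ?thesis using norm_sq_decomp[of y a] by (simp add: \<alpha>_def n_def w_def)
  qed
  have mob: "mobius a y = scaleC ((1 - \<alpha>) / d) a + scaleC (- complex_of_real s / d) w"
    using mobius_coord[OF w, of \<alpha>] yd by (simp add: d_def s_def n_def)
  have "(norm (mobius a y))^2 = (cmod ((1 - \<alpha>) / d))^2 * n + (cmod (- complex_of_real s / d))^2 * (norm w)^2"
    unfolding mob
    by (subst orth_norm) (simp_all add: cinner_scaleC_left cinner_scaleC_right w norm_scaleC power_mult_distrib n_def)
  also have "\<dots> = ((cmod (1 - \<alpha>))^2 * n + (1 - n) * (norm w)^2) / (cmod d)^2"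
    using n by (simp add: norm_divide power_divide s_def add_divide_distrib)
  also have "\<dots> < 1"
  proof -
    have "(cmod (1 - \<alpha>))^2 * n + (1 - n) * (norm w)^2 < (cmod d)^2"
      using key_ineq[OF n, of "(norm w)^2" "Re \<alpha>" "Im \<alpha>"] ny
      by (simp add: cmod_power2 d_def power_mult_distrib algebra_simps)
    moreover have "(cmod d)^2 > 0" using dnz by simp
    ultimately show ?thesis by simp
  qed
  finally show ?thesis by (simp add: power_less_one_iff)
qed

lemma mobius_invol:
  assumes a: "norm (a::'a::chilbert) < 1" and dy: "1 - cinner y a \<noteq> 0"
  shows "mobius a (mobius a y) = y"
proof -
  define n where "n = (norm a)^2"
  define N where "N = complex_of_real n"
  define \<alpha> where "\<alpha> = cinner y a / N"
  define w where "w = y - proj_line a y"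
  define d where "d = 1 - \<alpha> * N"
  define s where "s = sqrt (1 - n)"
  define S where "S = complex_of_real s"
  have n: "0 \<le> n" "n < 1" using a by (auto simp: n_def power_less_one_iff abs_less_iff)
  have S2: "S * S = 1 - N" using n by (simp add: S_def N_def s_def flip: of_real_mult)
  have N1: "1 - N \<noteq> 0" using n by (simp add: N_def)
  have w: "cinner w a = 0" by (simp add: w_def cinner_Q)
  have yd: "y = scaleC \<alpha> a + w" using decomp[of y a] by (simp add: \<alpha>_def w_def n_def N_def)
  have d: "d = 1 - cinner y a" using cinner_decomp[of y a] by (simp add: d_def \<alpha>_def n_def N_def)
  have dnz: "d \<noteq> 0" using dy d by simp
  define \<alpha>' where "\<alpha>' = (1 - \<alpha>) / d"
  define w' where "w' = scaleC (- S / d) w"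
  have w': "cinner w' a = 0" by (simp add: w'_def cinner_scaleC_left w)
  have mob: "mobius a y = scaleC \<alpha>' a + w'"
    using mobius_coord[OF w, of \<alpha>] yd by (simp add: d_def s_def n_def \<alpha>'_def w'_def S_def N_def)
  have d': "1 - \<alpha>' * N = (1 - N) / d"
    using dnz by (simp add: \<alpha>'_def d_def field_simps)
  have h1: "1 - \<alpha>' = \<alpha> * (1 - N) / d"
    using dnz by (simp add: \<alpha>'_def d_def field_simps)
  have e1: "(1 - \<alpha>') / (1 - \<alpha>' * N) = \<alpha>"
    unfolding d' h1 using dnz N1 by simp
  have e2: "(- S / (1 - \<alpha>' * N)) * (- S / d) = 1"
    unfolding d' using dnz N1 S2 by (simp add: field_simps)
  have "mobius a (mobius a y) = scaleC ((1 - \<alpha>') / (1 - \<alpha>' * N)) a + scaleC (- S / (1 - \<alpha>' * N)) w'"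
    unfolding mob using mobius_coord[OF w', of \<alpha>'] by (simp add: S_def s_def N_def n_def)
  also have "\<dots> = scaleC \<alpha> a + w"
    unfolding e1 w'_def scaleC_scaleC e2 by simp
  finally show ?thesis using yd by simp
qed



lemma bl_cinner: "bounded_linear (\<lambda>y. cinner y (a::'a::chilbert))"
proof (rule bounded_linear_intro[where K="norm a"])
  show "cinner (x + y) a = cinner x a + cinner y a" for x y by (rule cinner_add_left)
  show "cinner (scaleR r x) a = scaleR r (cinner x a)" for r x by (simp add: cinner_scaleR_left scaleR_conv_of_real)
  show "norm (cinner x a) \<le> norm x * norm a" for x by (rule cinner_cs)
qed

lemma bl_proj: "bounded_linear (proj_line (a::'a::chilbert))"
proof (rule bounded_linear_intro[where K=1])
  show "proj_line a (x + y) = proj_line a x + proj_line a y" for x y by (rule proj_add)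
  show "proj_line a (scaleR r x) = scaleR r (proj_line a x)" for r x by (metis proj_scaleC scaleC_of_real)
  show "norm (proj_line a x) \<le> norm x * 1" for x using norm_proj_le by simp
qed

lemma bbl_scaleC: "bounded_bilinear (\<lambda>(c::complex) (x::'a::chilbert). scaleC c x)"
proof
  show "scaleC (a + a') b = scaleC a b + scaleC a' b" for a a' and b::'a by (rule scaleC_add_left)
  show "scaleC a (b + b') = scaleC a b + scaleC a b'" for a and b b'::'a by (rule scaleC_add_right)
  show "scaleC (scaleR r a) b = scaleR r (scaleC a b)" for r a and b::'a
    by (simp add: scaleR_conv_of_real scaleC_of_real_mult)
  show "scaleC a (scaleR r b) = scaleR r (scaleC a b)" for r a and b::'a by (rule scaleC_scaleR_comm)
  show "\<exists>K. \<forall>a (b::'a). norm (scaleC a b) \<le> norm a * norm b * K"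
    by (rule exI[of _ 1]) (simp add: norm_scaleC)
qed

lemma bl_scaleC_left: "bounded_linear (\<lambda>c. scaleC c (u::'a::chilbert))"
  by (rule bounded_bilinear.bounded_linear_left[OF bbl_scaleC])

definition Tm :: "'a::chilbert \<Rightarrow> 'a \<Rightarrow> 'a" where
  "Tm a h = proj_line a h + scaleR (sqrt (1 - (norm a)^2)) (h - proj_line a h)"

lemma bl_Tm: "bounded_linear (Tm (a::'a::chilbert))"
  unfolding Tm_def
  by (intro bounded_linear_add bounded_linear_const_scaleR bounded_linear_sub bl_proj bounded_linear_ident)

lemma Tm_scaleC: "Tm a (scaleC c h) = scaleC c (Tm a (h::'a::chilbert))"
  unfolding Tm_def by (simp add: proj_scaleC scaleC_add_right scaleC_diff_right scaleC_scaleR_comm)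

lemma Tm_self: "Tm a a = (a::'a::chilbert)"
  by (simp add: Tm_def)

lemma norm_Tm_le: assumes "norm (a::'a::chilbert) \<le> 1" shows "norm (Tm a h) \<le> norm h"
proof -
  define s where "s = sqrt (1 - (norm a)^2)"
  define p where "p = proj_line a h"
  define q where "q = h - proj_line a h"
  have s: "0 \<le> s" "s \<le> 1" using assms by (auto simp: s_def abs_square_le_1)
  have c0: "cinner (scaleR s q) p = 0"
    unfolding p_def q_def
    apply (subst (2) norm_proj_eq)
    by (simp add: cinner_scaleC_right cinner_scaleR_left cinner_Q)
  have T: "Tm a h = p + scaleR s q" by (simp add: Tm_def s_def p_def q_def)
  have "(norm (Tm a h))^2 = (norm p)^2 + (norm (scaleR s q))^2"
    unfolding T by (rule orth_norm[OF c0])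
  also have "(norm (scaleR s q))^2 = s^2 * (norm q)^2"
    using s by (simp add: power_mult_distrib)
  also have "s^2 * (norm q)^2 \<le> (norm q)^2"
  proof -
    have "s^2 \<le> 1" using s by (simp add: abs_square_le_1)
    then show ?thesis by (simp add: mult_left_le_one_le)
  qed
  finally have "(norm (Tm a h))^2 \<le> (norm p)^2 + (norm q)^2" by simp
  also have "\<dots> = (norm h)^2" by (simp add: norm_decomp[of h a] p_def q_def)
  finally show ?thesis by (rule power2_le_imp_le) simp
qed

lemma mobius_T: "mobius a y = scaleC (1 / (1 - cinner y a)) (a - Tm a (y::'a::chilbert))"
  unfolding mobius_expand Tm_def by (simp add: algebra_simps)

definition Dmob :: "'a::chilbert \<Rightarrow> 'a \<Rightarrow> 'a \<Rightarrow> 'a" where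
  "Dmob a y h = scaleC (1 / (1 - cinner y a)) (- Tm a h) + scaleC (cinner h a / (1 - cinner y a)^2) (a - Tm a y)"

lemma mobius_has_derivative:
  assumes "1 - cinner y a \<noteq> 0"
  shows "(mobius (a::'a::chilbert) has_derivative Dmob a y) (at y)"
proof -
  have g: "((\<lambda>y. 1 - cinner y a) has_derivative (\<lambda>h. 0 - cinner h a)) (at y)"
    by (intro has_derivative_diff has_derivative_const bounded_linear.has_derivative[OF bl_cinner] has_derivative_ident)
  have q: "((\<lambda>y. 1 / (1 - cinner y a)) has_derivative
      (\<lambda>h. ((0::complex) * (1 - cinner y a) - 1 * (0 - cinner h a)) / ((1 - cinner y a) * (1 - cinner y a)))) (at y)"
    by (rule has_derivative_divide'[OF has_derivative_const g assms])
  have u: "((\<lambda>y. a - Tm a y) has_derivative (\<lambda>h. 0 - Tm a h)) (at y)"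
    by (intro has_derivative_diff has_derivative_const bounded_linear.has_derivative[OF bl_Tm] has_derivative_ident)
  have "((\<lambda>y. scaleC (1 / (1 - cinner y a)) (a - Tm a y)) has_derivative
     (\<lambda>h. scaleC (1 / (1 - cinner y a)) (0 - Tm a h) +
          scaleC (((0::complex) * (1 - cinner y a) - 1 * (0 - cinner h a)) / ((1 - cinner y a) * (1 - cinner y a))) (a - Tm a y))) (at y)"
    using bounded_bilinear.FDERIV[OF bbl_scaleC q u] by simp
  moreover have "(\<lambda>h. scaleC (1 / (1 - cinner y a)) (0 - Tm a h) +
          scaleC (((0::complex) * (1 - cinner y a) - 1 * (0 - cinner h a)) / ((1 - cinner y a) * (1 - cinner y a))) (a - Tm a y))
       = Dmob a y"
    by (rule ext) (simp add: Dmob_def power2_eq_square)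
  ultimately show ?thesis by (simp add: mobius_T[abs_def])
qed

lemma Dmob_clinear:
  assumes "1 - cinner y a \<noteq> 0"
  shows "clinear_map (Dmob (a::'a::chilbert) y)"
  unfolding clinear_map_def
proof
  show "bounded_linear (Dmob a y)"
    using mobius_has_derivative[OF assms] has_derivative_bounded_linear by blast
  show "\<forall>c h. Dmob a y (scaleC c h) = scaleC c (Dmob a y h)"
    by (simp add: Dmob_def Tm_scaleC cinner_scaleC_left scaleC_add_right scaleC_diff_right scaleC_scaleC scaleC_minus_right)
qed

lemma Dmob_at_self:
  assumes "norm (a::'a::chilbert) < 1"
  shows "Dmob a a h = - scaleC (1 / complex_of_real (1 - (norm a)^2)) (Tm a h)"
  by (simp add: Dmob_def Tm_self cinner_self scaleC_minus_right)

lemma norm_Dmob_at_self: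
  assumes "norm (a::'a::chilbert) < 1"
  shows "norm (Dmob a a h) \<le> norm h / (1 - (norm a)^2)"
proof -
  have p: "1 - (norm a)^2 > 0" using assms by (simp add: abs_square_less_1)
  have e: "complex_of_real (1 - (norm a)^2) = 1 - (complex_of_real (norm a))^2" by simp
  have "norm (Dmob a a h) = norm (Tm a h) / (1 - (norm a)^2)"
    using p unfolding Dmob_at_self[OF assms] norm_minus_cancel norm_scaleC norm_divide
    by (simp del: of_real_diff of_real_power)
  also have "\<dots> \<le> norm h / (1 - (norm a)^2)"
    using norm_Tm_le[of a h] assms p by (simp add: divide_right_mono)
  finally show ?thesis .
qed

lemma Dmob_at_zero:
  "Dmob a 0 h = - (scaleR (1 - (norm a)^2) (proj_line a h) + scaleR (sqrt (1 - (norm a)^2)) (h - proj_line (a::'a::chilbert) h))"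
proof -
  have e: "scaleC (cinner h a) a = scaleR ((norm a)^2) (proj_line a h)"
  proof (cases "a = 0")
    case False
    then show ?thesis
      by (simp add: proj_line_def scaleC_of_real_mult[symmetric] scaleC_scaleC flip: scaleC_of_real)
  qed simp
  show ?thesis
    unfolding Dmob_def using e by (simp add: Tm_def Tm_self algebra_simps scaleC_minus_right)
qed



lemma in_unit_ball: "z \<in> unit_ball \<longleftrightarrow> norm (z::'a::chilbert) < 1"
  by (simp add: unit_ball_def)

lemma fderiv_eq: "(f has_derivative L) (at x) \<Longrightarrow> fderiv f x = L"
  unfolding fderiv_def by (rule some_equality) (auto intro: has_derivative_unique)

lemma analytic_deriv:
  assumes "analytic_fun f" "x \<in> unit_ball"
  shows "(f has_derivative fderiv f x) (at x)" "clinear_functional (fderiv f x)"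
proof -
  obtain L where L: "clinear_functional L" "(f has_derivative L) (at x)"
    using assms unfolding analytic_fun_def by blast
  then show "(f has_derivative fderiv f x) (at x)" "clinear_functional (fderiv f x)"
    using fderiv_eq[OF L(2)] by simp_all
qed

lemma clinear_functional_compose:
  "clinear_functional L \<Longrightarrow> clinear_map D \<Longrightarrow> clinear_functional (\<lambda>h. L (D h))"
  unfolding clinear_functional_def clinear_map_def
  by (auto intro: bounded_linear_compose)

lemma clinear_map_compose:
  "clinear_map D1 \<Longrightarrow> clinear_map D2 \<Longrightarrow> clinear_map (\<lambda>h. D1 (D2 h))"
  unfolding clinear_map_def
  by (auto intro: bounded_linear_compose)

lemma onorm_bound: "bounded_linear L \<Longrightarrow> norm (L x) \<le> onorm L * norm x"
  by (rule onorm)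

lemma schwarz_functional:
  fixes \<psi> :: "'a::chilbert \<Rightarrow> 'a"
  assumes ball: "\<And>z. norm z < 1 \<Longrightarrow> norm (\<psi> z) < 1"
    and p0: "\<psi> 0 = 0"
    and der: "\<And>z. norm z < 1 \<Longrightarrow> (\<psi> has_derivative D z) (at z) \<and> clinear_map (D z)"
    and L: "clinear_functional L"
  shows "cmod (L (D 0 v)) \<le> onorm L * norm v"
proof -
  have blL: "bounded_linear L" using L by (simp add: clinear_functional_def)
  have LC: "L (scaleC c x) = c * L x" for c x using L by (simp add: clinear_functional_def)
  have D0: "clinear_map (D 0)" using der[of 0] by simp
  have blD: "bounded_linear (D 0)" using D0 by (simp add: clinear_map_def)
  have DC: "D 0 (scaleC c x) = scaleC c (D 0 x)" for c x using D0 by (simp add: clinear_map_def)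
  show ?thesis
  proof (cases "v = 0 \<or> onorm L = 0")
    case True
    then show ?thesis
    proof
      assume "v = 0" then show ?thesis using blD blL by (simp add: linear_simps)
    next
      assume "onorm L = 0"
      then show ?thesis using onorm_bound[OF blL, of "D 0 v"] by simp
    qed
  next
    case False
    then have vnz: "v \<noteq> 0" and B0: "onorm L > 0" using onorm_pos_le[OF blL] by auto
    define B where "B = onorm L"
    define u where "u = scaleR (1 / norm v) v"
    have nu: "norm u = 1" using vnz by (simp add: u_def)
    define k where "k = (\<lambda>t. L (\<psi> (scaleC t u)) / B)"
    have inb: "norm (scaleC t u) < 1" if "norm t < 1" for t
      using that nu by (simp add: norm_scaleC)
    have kder: "(k has_field_derivative (L (D (scaleC t u) u) / B)) (at t)" if tl: "norm t < 1" for t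
    proof -
      obtain Dz: "(\<psi> has_derivative D (scaleC t u)) (at (scaleC t u))" "clinear_map (D (scaleC t u))"
        using der[OF inb[OF tl]] by blast
      have c1: "((\<lambda>t. scaleC t u) has_derivative (\<lambda>h. scaleC h u)) (at t)"
        by (rule bounded_linear.has_derivative[OF bl_scaleC_left has_derivative_ident])
      have c2: "((\<lambda>t. \<psi> (scaleC t u)) has_derivative (\<lambda>h. D (scaleC t u) (scaleC h u))) (at t)"
        by (rule has_derivative_compose[OF c1 Dz(1)])
      have c3: "((\<lambda>t. L (\<psi> (scaleC t u)) / B) has_derivative (\<lambda>h. L (D (scaleC t u) (scaleC h u)) / B)) (at t)"
        by (rule bounded_linear.has_derivative[OF bounded_linear_divide bounded_linear.has_derivative[OF blL c2]])
      have "(\<lambda>h. L (D (scaleC t u) (scaleC h u)) / B) = (\<lambda>h. (L (D (scaleC t u) u) / B) * h)"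
        using Dz(2) by (auto simp: clinear_map_def LC)
      then have "(k has_derivative (\<lambda>h. (L (D (scaleC t u) u) / B) * h)) (at t)"
        using c3 by (simp add: k_def)
      then show ?thesis unfolding has_field_derivative_def by (simp only:)
    qed
    have hol: "k holomorphic_on ball 0 1"
      unfolding holomorphic_on_def field_differentiable_def
      using kder has_field_derivative_at_within by (metis mem_ball_0)
    have k0: "k 0 = 0" using blL p0 by (simp add: k_def linear_simps)
    have kb: "norm (k z) < 1" if "norm z < 1" for z
    proof -
      have "cmod (L (\<psi> (scaleC z u))) \<le> B * norm (\<psi> (scaleC z u))"
        using onorm_bound[OF blL] by (simp add: B_def)
      also have "\<dots> < B" using ball[OF inb[OF that]] B0 by (simp add: B_def)
      finally show ?thesis using B0 by (simp add: k_def B_def norm_divide)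
    qed
    have "norm (deriv k 0) \<le> 1"
      using Schwarz_Lemma(2)[OF hol k0 kb, of 0] by simp
    moreover have "deriv k 0 = L (D 0 u) / B"
      using DERIV_imp_deriv[OF kder[of 0]] by simp
    ultimately have "cmod (L (D 0 u)) \<le> B" using B0 by (simp add: B_def norm_divide)
    moreover have "L (D 0 v) = complex_of_real (norm v) * L (D 0 u)"
    proof -
      have "v = scaleC (complex_of_real (norm v)) u" using vnz by (simp add: u_def scaleC_of_real)
      then have "L (D 0 v) = L (D 0 (scaleC (complex_of_real (norm v)) u))" by simp
      also have "\<dots> = complex_of_real (norm v) * L (D 0 u)" by (simp add: DC LC)
      finally show ?thesis .
    qed
    ultimately show ?thesis
      by (simp add: norm_mult B_def) (metis mult.commute mult_left_mono norm_ge_zero)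
  qed
qed



lemma cinner_scaleR_right: "cinner x (scaleR r y) = complex_of_real r * cinner x (y::'a::chilbert)"
  by (metis cinner_scaleC_right scaleC_of_real complex_cnj_complex_of_real)

lemma slice_deriv:
  assumes f: "analytic_fun f" and b: "norm (b + scaleC t w) < 1"
  shows "((\<lambda>t. f (b + scaleC t (w::'a::chilbert))) has_field_derivative fderiv f (b + scaleC t w) w) (at t)"
proof -
  have inb: "b + scaleC t w \<in> unit_ball" using b by (simp add: in_unit_ball)
  note D = analytic_deriv[OF f inb]
  have c1: "((\<lambda>t. b + scaleC t w) has_derivative (\<lambda>h. 0 + scaleC h w)) (at t)"
    by (intro has_derivative_add has_derivative_const bounded_linear.has_derivative[OF bl_scaleC_left has_derivative_ident])
  have c2: "((\<lambda>t. f (b + scaleC t w)) has_derivative (\<lambda>h. fderiv f (b + scaleC t w) (0 + scaleC h w))) (at t)"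
    by (rule has_derivative_compose[OF c1 D(1)])
  have "(\<lambda>h. fderiv f (b + scaleC t w) (0 + scaleC h w)) = (\<lambda>h. fderiv f (b + scaleC t w) w * h)"
    using D(2) by (auto simp: clinear_functional_def mult.commute)
  then show ?thesis using c2 unfolding has_field_derivative_def by simp
qed

lemma norm_orth_sum:
  assumes "cinner w a = 0"
  shows "(norm (scaleR c a + scaleC t w))^2 = c^2 * (norm a)^2 + (cmod t)^2 * (norm (w::'a::chilbert))^2"
proof -
  have "cinner (scaleC t w) (scaleR c a) = 0"
    using assms by (simp add: cinner_scaleC_left cinner_scaleR_right)
  from orth_norm[OF this] show ?thesis by (simp add: norm_scaleC power_mult_distrib)
qed

context
  fixes f :: "'a::chilbert \<Rightarrow> complex" and M :: real
  assumes f: "analytic_fun f"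
    and M: "\<And>x. norm x < 1 \<Longrightarrow> (1 - (norm x)^2) * onorm (fderiv f x) \<le> M"
begin

lemma M_nonneg: "0 \<le> M"
  using M[of 0] onorm_pos_le[of "fderiv f 0"] analytic_deriv(2)[OF f, of 0]
  by (simp add: in_unit_ball clinear_functional_def)

lemma df_bound: assumes "norm x < 1" shows "cmod (fderiv f x h) \<le> M / (1 - (norm x)^2) * norm h"
proof -
  have p: "1 - (norm x)^2 > 0" using assms by (simp add: abs_square_less_1)
  have bl: "bounded_linear (fderiv f x)"
    using analytic_deriv(2)[OF f] assms by (simp add: in_unit_ball clinear_functional_def)
  have "onorm (fderiv f x) \<le> M / (1 - (norm x)^2)" using M[OF assms] p by (simp add: field_simps)
  then show ?thesis using onorm[OF bl, of h] by (meson mult_right_mono norm_ge_zero order_trans)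
qed

lemma onorm_df_bound: assumes "norm x < 1" shows "onorm (fderiv f x) \<le> M / (1 - (norm x)^2)"
proof -
  have p: "1 - (norm x)^2 > 0" using assms by (simp add: abs_square_less_1)
  show ?thesis using M[OF assms] p by (simp add: field_simps)
qed

lemma radial_step:
  assumes a: "norm a < 1" and w: "norm w = 1" "cinner w a = 0"
    and s4: "1 - (norm a)^2 < 1/4"
    and a': "a' = scaleR (sqrt (1 - 4 * (1 - (norm a)^2)) / norm a) a"
  shows "cmod (fderiv f a w - fderiv f a' w) \<le> 16 * M / sqrt (1 - (norm a)^2)"
proof -
  define s where "s = sqrt (1 - (norm a)^2)"
  define r where "r = norm a"
  define r' where "r' = sqrt (1 - 4 * s^2)"
  have r1: "r < 1" using a by (simp add: r_def)
  have s2: "s^2 = 1 - r^2" using r1 by (simp add: s_def r_def abs_square_le_1)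
  have spos: "s > 0" using a by (simp add: s_def abs_square_less_1)
  have s4': "s^2 < 1/4" using s4 s2 by (simp add: r_def)
  have r2: "r^2 > 3/4" using s4' s2 by simp
  have rpos: "r > 1/2"
  proof (rule ccontr)
    assume "\<not> r > 1/2"
    then have "r \<le> 1/2" by simp
    then have "r^2 \<le> (1/2)^2" using power_mono[of r "1/2" 2] by (simp add: r_def)
    then show False using r2 by (simp add: power2_eq_square)
  qed
  have s4'': "0 \<le> 1 - 4 * s^2" using s4' by linarith
  then have r'2: "r'^2 = 1 - 4 * s^2" unfolding r'_def by (rule real_sqrt_pow2)
  have r'pos: "r' \<ge> 0" unfolding r'_def by (rule real_sqrt_ge_zero[OF s4''])
  have r2le: "r^2 \<le> 1" using r1 norm_ge_zero[of a] unfolding r_def by (simp add: power_le_one)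
  have r'r2: "r'^2 \<le> r^2" using r'2 s2 r2le by linarith
  have r'r: "r' \<le> r" using power2_le_imp_le[OF r'r2] rpos by linarith
  define lm where "lm = r' / r"
  have e: "1 - (norm a)^2 = s^2" using s2 by (simp add: r_def)
  have a'd: "a' = scaleR lm a" unfolding a' e by (simp add: lm_def r'_def r_def)
  have lam: "0 \<le> lm" "lm \<le> 1"
    using r'pos r'r rpos by (simp_all add: lm_def divide_le_eq_1_pos)
  have na': "norm a' = r'" using rpos r'pos by (auto simp: a'd lm_def r_def)
  define \<rho> where "\<rho> = s / 2"
  have rho: "\<rho> > 0" using spos by (simp add: \<rho>_def)
  define g where "g = (\<lambda>t. f (a + scaleC t w) - f (a' + scaleC t w))"
  have ptnorm: "(norm (scaleR c a + scaleC t w))^2 = c^2 * r^2 + (cmod t)^2" for c t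
    using norm_orth_sum[OF w(2), of c t] w(1) by (simp add: r_def)
  have inball: "norm (scaleR c a + scaleC t w) < 1" if "cmod t < s" "\<bar>c\<bar> \<le> 1" for c t
  proof -
    have "c^2 \<le> 1" using that(2) by (simp add: abs_square_le_1)
    then have "c^2 * r^2 \<le> r^2" using mult_left_le_one_le[of "r^2" "c^2"] by simp
    moreover have "(cmod t)^2 < s^2" using that(1) by (simp add: power_strict_mono)
    ultimately have "(norm (scaleR c a + scaleC t w))^2 < 1" using ptnorm[of c t] s2 by simp
    then show ?thesis by (simp add: abs_square_less_1)
  qed
  have gder: "(g has_field_derivative (fderiv f (a + scaleC t w) w - fderiv f (a' + scaleC t w) w)) (at t)"
    if "cmod t < s" for t
  proof -
    have i1: "norm (a + scaleC t w) < 1" using inball[OF that, of 1] by simp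
    have i2: "norm (a' + scaleC t w) < 1" using inball[OF that, of lm] lam by (simp add: a'd)
    show ?thesis unfolding g_def
      by (rule DERIV_diff[OF slice_deriv[OF f i1] slice_deriv[OF f i2]])
  qed
  have hol: "g holomorphic_on ball 0 s"
    unfolding holomorphic_on_def field_differentiable_def
    using gder has_field_derivative_at_within by (metis mem_ball_0)
  have cont: "continuous_on (cball 0 \<rho>) g"
    using holomorphic_on_imp_continuous_on[OF hol]
    by (rule continuous_on_subset) (use spos in \<open>auto simp: \<rho>_def\<close>)
  have gb: "norm (g t) \<le> 8 * M" if "norm (0 - t) = \<rho>" for t
  proof -
    have t: "cmod t = \<rho>" using that by simp
    define S where "S = closed_segment (a' + scaleC t w) (a + scaleC t w)"
    have Sform: "\<exists>c. lm \<le> c \<and> c \<le> 1 \<and> p = scaleR c a + scaleC t w" if "p \<in> S" for p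
    proof -
      obtain u where u: "0 \<le> u" "u \<le> 1" "p = (1 - u) *\<^sub>R (a' + scaleC t w) + u *\<^sub>R (a + scaleC t w)"
        using \<open>p \<in> S\<close> unfolding S_def in_segment by blast
      have "p = scaleR ((1-u) * lm + u) a + scaleC t w"
        using u(3) by (simp add: a'd algebra_simps)
      moreover have "lm \<le> (1-u) * lm + u" "(1-u) * lm + u \<le> 1"
      proof -
        have "(1-u) * lm \<le> 1 - u" "u * lm \<le> u"
          using u lam by (simp_all add: mult_right_le_one_le)
        then show "lm \<le> (1-u) * lm + u" "(1-u) * lm + u \<le> 1" by (simp_all add: algebra_simps)
      qed
      ultimately show ?thesis by blast
    qed
    have Sball: "norm p < 1" "1 - (norm p)^2 \<ge> 3/4 * s^2" if pS: "p \<in> S" for p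
    proof -
      obtain c where c: "lm \<le> c" "c \<le> 1" "p = scaleR c a + scaleC t w" using Sform[OF pS] by blast
      have "c^2 \<le> 1" using c lam by (simp add: abs_square_le_1)
      then have "c^2 * r^2 \<le> r^2" using mult_left_le_one_le[of "r^2" "c^2"] by simp
      then have "(norm p)^2 \<le> r^2 + s^2/4" using ptnorm[of c t] t c(3) by (simp add: \<rho>_def power_divide)
      then show "1 - (norm p)^2 \<ge> 3/4 * s^2" using s2 by linarith
      show "norm p < 1" using inball[of t c] c lam t rho by (simp add: \<rho>_def)
    qed
    have derS: "(f has_derivative fderiv f p) (at p within S)" if "p \<in> S" for p
      using analytic_deriv(1)[OF f] Sball(1)[OF that] by (simp add: in_unit_ball has_derivative_at_withinI)
    have onS: "onorm (fderiv f p) \<le> 4 * M / (3 * s^2)" if "p \<in> S" for p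
    proof -
      have "onorm (fderiv f p) \<le> M / (1 - (norm p)^2)" by (rule onorm_df_bound[OF Sball(1)[OF that]])
      also have "\<dots> \<le> M / (3/4 * s^2)"
      proof -
        have q1: "0 < 3/4 * s^2" using spos by simp
        have q2: "3/4 * s^2 \<le> 1 - (norm p)^2" using Sball(2)[OF that] by simp
        have q3: "0 < (1 - (norm p)^2) * (3/4 * s^2)" using q1 q2 by (intro mult_pos_pos) linarith+
        show ?thesis by (rule divide_left_mono[OF q2 M_nonneg q3])
      qed
      also have "\<dots> = 4 * M / (3 * s^2)" by simp
      finally show ?thesis .
    qed
    have "norm (f (a + scaleC t w) - f (a' + scaleC t w)) \<le> 4 * M / (3 * s^2) * norm ((a + scaleC t w) - (a' + scaleC t w))"
    proof -
      have cS: "convex S" by (simp add: S_def)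
      show ?thesis by (rule differentiable_bound[OF cS derS onS]) (auto simp: S_def)
    qed
    also have "norm ((a + scaleC t w) - (a' + scaleC t w)) = r - r'"
    proof -
      have "(a + scaleC t w) - (a' + scaleC t w) = scaleR (1 - lm) a" by (simp add: a'd algebra_simps)
      then have "norm ((a + scaleC t w) - (a' + scaleC t w)) = (1 - lm) * r"
        using lam by (simp add: r_def)
      also have "\<dots> = r - r'" using rpos by (simp add: lm_def field_simps)
      finally show ?thesis .
    qed
    also have "r - r' \<le> 6 * s^2"
    proof -
      have "(r - r') * (r + r') = 3 * s^2" using r'2 s2 by (simp add: algebra_simps power2_eq_square)
      moreover have "r + r' \<ge> 1/2" using rpos r'pos by simp
      moreover have "r - r' \<ge> 0" using r'r by simp
      ultimately have "(r - r') * (1/2) \<le> 3 * s^2" by (metis mult_left_mono)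
      then show ?thesis by simp
    qed
    then have "4 * M / (3 * s^2) * (r - r') \<le> 4 * M / (3 * s^2) * (6 * s^2)"
      using M_nonneg spos by (intro mult_left_mono) auto
    also have "\<dots> = 8 * M" using spos by (simp add: field_simps)
    finally show ?thesis by (simp add: g_def)
  qed
  have "norm ((deriv ^^ 1) g 0) \<le> fact 1 * (8 * M) / \<rho> ^ 1"
  proof -
    have sub: "ball 0 \<rho> \<subseteq> ball 0 s" using spos by (auto simp: \<rho>_def)
    show ?thesis using Cauchy_inequality[OF holomorphic_on_subset[OF hol sub] cont rho gb, of 1] .
  qed
  moreover have "(deriv ^^ 1) g 0 = fderiv f a w - fderiv f a' w"
    using DERIV_imp_deriv[OF gder[of 0]] spos by simp
  ultimately show ?thesis using spos by (simp add: \<rho>_def s_def)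
qed

end



context
  fixes f :: "'a::chilbert \<Rightarrow> complex" and M :: real
  assumes f: "analytic_fun f"
    and M: "\<And>x. norm x < 1 \<Longrightarrow> (1 - (norm x)^2) * onorm (fderiv f x) \<le> M"
begin

lemma direct_bound:
  assumes a: "norm a < 1" and s: "1 - (norm a)^2 \<ge> 1/4" and w: "norm w = 1"
  shows "cmod (fderiv f a w) * sqrt (1 - (norm a)^2) \<le> 32 * M"
proof -
  define s where "s = sqrt (1 - (norm a)^2)"
  have p: "1 - (norm a)^2 > 0" using a by (simp add: abs_square_less_1)
  have s2: "s^2 = 1 - (norm a)^2" using p by (simp add: s_def)
  have sh: "s \<ge> 1/2" unfolding s_def using s by (intro real_le_rsqrt) (simp add: power_divide)
  have M0: "0 \<le> M" by (rule M_nonneg[OF f M])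
  have "cmod (fderiv f a w) \<le> M / s^2" using df_bound[OF f M a, of w] w s2 by simp
  then have "cmod (fderiv f a w) * s \<le> M / s^2 * s" using sh by (intro mult_right_mono) auto
  also have "\<dots> = M / s" using sh by (simp add: power2_eq_square)
  also have "\<dots> \<le> 2 * M"
  proof -
    have "M * 1 \<le> M * (2 * s)" using sh M0 by (intro mult_left_mono) auto
    then show ?thesis using sh by (simp add: divide_le_eq mult.commute mult.left_commute)
  qed
  also have "\<dots> \<le> 32 * M" using M0 by simp
  finally show ?thesis by (simp add: s_def)
qed

lemma tang_ind:
  "\<forall>a w. norm a < 1 \<longrightarrow> 1 - (norm a)^2 \<ge> (1/4)^k \<longrightarrow> norm w = 1 \<longrightarrow> cinner w a = 0 \<longrightarrow>
     cmod (fderiv f a w) * sqrt (1 - (norm a)^2) \<le> 32 * M"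
proof (induction k)
  case 0
  show ?case
  proof (intro allI impI)
    fix a w :: 'a
    assume "norm a < 1" "1 - (norm a)^2 \<ge> (1/4)^0" "norm w = 1"
    moreover have "1 - (norm a)^2 \<ge> 1/4" using calculation(2) by simp
    ultimately show "cmod (fderiv f a w) * sqrt (1 - (norm a)^2) \<le> 32 * M"
      using direct_bound by blast
  qed
next
  case (Suc k)
  show ?case
  proof (intro allI impI)
    fix a w :: 'a
    assume a: "norm a < 1" and ak: "1 - (norm a)^2 \<ge> (1/4)^Suc k" and w: "norm w = 1" and wa: "cinner w a = 0"
    show "cmod (fderiv f a w) * sqrt (1 - (norm a)^2) \<le> 32 * M"
    proof (cases "1 - (norm a)^2 \<ge> 1/4")
      case True
      then show ?thesis using direct_bound[OF a True w] by simp
    next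
      case False
      then have s4: "1 - (norm a)^2 < 1/4" by simp
      define s where "s = sqrt (1 - (norm a)^2)"
      have p: "1 - (norm a)^2 > 0" using a by (simp add: abs_square_less_1)
      have spos: "s > 0" using p by (simp add: s_def)
      have s2: "s^2 = 1 - (norm a)^2" using p by (simp add: s_def)
      have na: "norm a > 0" using s4 by (auto simp: abs_square_less_1)
      define r' where "r' = sqrt (1 - 4 * (1 - (norm a)^2))"
      have q: "0 \<le> 1 - 4 * (1 - (norm a)^2)" using s4 by (simp add: algebra_simps)
      have r'2: "r'^2 = 1 - 4 * (1 - (norm a)^2)" unfolding r'_def by (rule real_sqrt_pow2[OF q])
      have r'0: "r' \<ge> 0" unfolding r'_def by (rule real_sqrt_ge_zero[OF q])
      define a' where "a' = scaleR (r' / norm a) a"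
      have na': "norm a' = r'" using na r'0 by (simp add: a'_def)
      have a'1: "norm a' < 1"
      proof -
        have "r'^2 < 1" using r'2 p by (simp add: algebra_simps)
        then show ?thesis using na' r'0 by (simp add: abs_square_less_1)
      qed
      have a's: "1 - (norm a')^2 = 4 * s^2" using na' r'2 s2 by simp
      have a'k: "1 - (norm a')^2 \<ge> (1/4)^k"
        using ak unfolding a's s2 by simp
      have wa': "cinner w a' = 0" using wa by (simp add: a'_def cinner_scaleR_right)
      have IH: "cmod (fderiv f a' w) * sqrt (1 - (norm a')^2) \<le> 32 * M"
        using Suc.IH a'1 a'k w wa' by blast
      have sq: "sqrt (1 - (norm a')^2) = 2 * s" unfolding a's using spos
        by (simp add: real_sqrt_mult)
      have b1: "cmod (fderiv f a' w) \<le> 16 * M / s" using IH spos unfolding sq by (simp add: field_simps)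
      have b2: "cmod (fderiv f a w - fderiv f a' w) \<le> 16 * M / s"
        using radial_step[OF f M a w wa s4 a'_def[unfolded r'_def]] by (simp add: s_def)
      have "cmod (fderiv f a w) \<le> cmod (fderiv f a w - fderiv f a' w) + cmod (fderiv f a' w)"
        by (metis diff_add_cancel norm_triangle_ineq)
      also have "\<dots> \<le> 32 * M / s" using b1 b2 by simp
      finally have X: "cmod (fderiv f a w) \<le> 32 * M / s" .
      have "cmod (fderiv f a w) * s \<le> 32 * M / s * s"
        by (rule mult_right_mono[OF X]) (use spos in simp)
      then show ?thesis using spos by (simp add: s_def)
    qed
  qed
qed

lemma tang_bound:
  assumes a: "norm a < 1" and wa: "cinner w a = 0"
  shows "cmod (fderiv f a w) * sqrt (1 - (norm a)^2) \<le> 32 * M * norm w"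
proof (cases "w = 0")
  case True
  have "bounded_linear (fderiv f a)"
    using analytic_deriv(2)[OF f] a by (simp add: in_unit_ball clinear_functional_def)
  then show ?thesis using True by (simp add: linear_simps)
next
  case False
  have p: "1 - (norm a)^2 > 0" using a by (simp add: abs_square_less_1)
  obtain k where k: "(1/4::real)^k < 1 - (norm a)^2" using real_arch_pow_inv[OF p] by force
  define u where "u = scaleR (1 / norm w) w"
  have nu: "norm u = 1" using False by (simp add: u_def)
  have ua: "cinner u a = 0" using wa by (simp add: u_def cinner_scaleR_left)
  have bu: "cmod (fderiv f a u) * sqrt (1 - (norm a)^2) \<le> 32 * M"
    using tang_ind[of k] a k nu ua by auto
  have bl: "bounded_linear (fderiv f a)"
    using analytic_deriv(2)[OF f] a by (simp add: in_unit_ball clinear_functional_def)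
  have "fderiv f a w = fderiv f a (scaleR (norm w) u)" using False by (simp add: u_def)
  also have "\<dots> = scaleR (norm w) (fderiv f a u)" using bl by (simp add: linear_simps)
  finally have "cmod (fderiv f a w) = norm w * cmod (fderiv f a u)" by simp
  then show ?thesis using mult_left_mono[OF bu norm_ge_zero[of w]] by (simp add: algebra_simps)
qed

lemma inv_bound:
  assumes a: "norm a < 1"
  shows "onorm (\<lambda>h. fderiv f a (Dmob a 0 h)) \<le> 33 * M"
proof (rule Operator_Norm.onorm_bound)
  show "0 \<le> 33 * M" using M_nonneg[OF f M] by simp
next
  fix h
  define n where "n = (norm a)^2"
  define s where "s = sqrt (1 - n)"
  define p where "p = proj_line a h"
  define q where "q = h - proj_line a h"
  have pn: "1 - n > 0" using a by (simp add: n_def abs_square_less_1)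
  have bl: "bounded_linear (fderiv f a)"
    using analytic_deriv(2)[OF f] a by (simp add: in_unit_ball clinear_functional_def)
  have "fderiv f a (Dmob a 0 h) = - (scaleR (1 - n) (fderiv f a p) + scaleR s (fderiv f a q))"
    unfolding Dmob_at_zero using bl by (simp add: linear_simps n_def s_def p_def q_def)
  moreover have "cmod (- (scaleR (1 - n) (fderiv f a p) + scaleR s (fderiv f a q))) \<le>
      cmod (scaleR (1 - n) (fderiv f a p)) + cmod (scaleR s (fderiv f a q))"
    by (metis norm_minus_cancel norm_triangle_ineq)
  ultimately have "cmod (fderiv f a (Dmob a 0 h)) \<le> (1 - n) * cmod (fderiv f a p) + s * cmod (fderiv f a q)"
    using pn by (simp add: s_def)
  also have "(1 - n) * cmod (fderiv f a p) \<le> M * norm h"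
  proof -
    have "cmod (fderiv f a p) \<le> M / (1 - n) * norm p" using df_bound[OF f M a] by (simp add: n_def)
    then have "(1 - n) * cmod (fderiv f a p) \<le> M * norm p" using pn by (simp add: field_simps)
    also have "\<dots> \<le> M * norm h" using M_nonneg[OF f M] norm_proj_le[of a h] by (simp add: p_def mult_left_mono)
    finally show ?thesis .
  qed
  also have "s * cmod (fderiv f a q) \<le> 32 * M * norm h"
  proof -
    have "s * cmod (fderiv f a q) \<le> 32 * M * norm q"
      using tang_bound[OF a, of q] by (simp add: q_def cinner_Q s_def n_def mult.commute)
    also have "\<dots> \<le> 32 * M * norm h" using M_nonneg[OF f M] norm_Q_le[of h a] by (simp add: q_def mult_left_mono)
    finally show ?thesis .
  qed
  finally show "cmod (fderiv f a (Dmob a 0 h)) \<le> 33 * M * norm h" by simp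
qed

end



lemma mob_props:
  assumes a: "norm (a::'a::chilbert) < 1" and z: "norm z < 1"
  shows "norm (mobius a z) < 1" "1 - cinner z a \<noteq> 0"
    "(mobius a has_derivative Dmob a z) (at z)" "clinear_map (Dmob a z)"
  using mobius_in_ball[OF a z] mobius_denom_nz[OF a z]
    mobius_has_derivative[OF mobius_denom_nz[OF a z]] Dmob_clinear[OF mobius_denom_nz[OF a z]]
  by auto

lemma comp_mob0:
  assumes f: "analytic_fun f" and a: "norm (a::'a::chilbert) < 1"
  shows "((f \<circ> mobius a) has_derivative (\<lambda>h. fderiv f a (Dmob a 0 h))) (at 0)"
    "fderiv (f \<circ> mobius a) 0 = (\<lambda>h. fderiv f a (Dmob a 0 h))"
proof -
  have m: "(mobius a has_derivative Dmob a 0) (at 0)" using mob_props(3)[OF a, of 0] by simp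
  have fd: "(f has_derivative fderiv f (mobius a 0)) (at (mobius a 0))"
    using analytic_deriv(1)[OF f] a by (simp add: mobius_zero in_unit_ball)
  show d: "((f \<circ> mobius a) has_derivative (\<lambda>h. fderiv f a (Dmob a 0 h))) (at 0)"
    using has_derivative_compose[OF m fd] by (simp add: mobius_zero o_def)
  show "fderiv (f \<circ> mobius a) 0 = (\<lambda>h. fderiv f a (Dmob a 0 h))"
    by (rule fderiv_eq[OF d])
qed

lemma lower_bound:
  assumes g: "analytic_fun g" and x: "norm (x::'a::chilbert) < 1"
  shows "(1 - (norm x)^2) * onorm (fderiv g x) \<le> onorm (fderiv (g \<circ> mobius x) 0)"
proof -
  define G where "G = g \<circ> mobius x"
  have p: "1 - (norm x)^2 > 0" using x by (simp add: abs_square_less_1)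
  have Gd: "(G has_derivative fderiv G 0) (at 0)"
    using comp_mob0[OF g x] unfolding G_def by simp
  have blG: "bounded_linear (fderiv G 0)" using has_derivative_bounded_linear[OF Gd] .
  have m: "(mobius x has_derivative Dmob x x) (at x)" using mob_props(3)[OF x x] .
  have Gd': "(G has_derivative fderiv G 0) (at (mobius x x))" using Gd by (simp add: mobius_self)
  have c: "((\<lambda>z. G (mobius x z)) has_derivative (\<lambda>h. fderiv G 0 (Dmob x x h))) (at x)"
    by (rule has_derivative_compose[OF m Gd'])
  have eq: "G (mobius x z) = g z" if "z \<in> unit_ball" for z
    using mobius_invol[OF x mobius_denom_nz[OF x]] that by (simp add: G_def in_unit_ball)
  have "(g has_derivative (\<lambda>h. fderiv G 0 (Dmob x x h))) (at x)"
  proof -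
    have ob: "open (unit_ball::'a set)" by (simp add: unit_ball_def)
    have xi: "x \<in> unit_ball" using x by (simp add: in_unit_ball)
    show ?thesis by (rule has_derivative_transform_within_open[OF c ob xi eq])
  qed
  then have gd: "fderiv g x = (\<lambda>h. fderiv G 0 (Dmob x x h))" by (rule fderiv_eq)
  have "onorm (fderiv g x) \<le> onorm (fderiv G 0) / (1 - (norm x)^2)"
  proof (rule Operator_Norm.onorm_bound)
    show "0 \<le> onorm (fderiv G 0) / (1 - (norm x)^2)" using onorm_pos_le[OF blG] p by simp
    fix h
    have "cmod (fderiv g x h) \<le> onorm (fderiv G 0) * norm (Dmob x x h)"
      unfolding gd by (rule onorm[OF blG])
    also have "\<dots> \<le> onorm (fderiv G 0) * (norm h / (1 - (norm x)^2))"
      using norm_Dmob_at_self[OF x, of h] onorm_pos_le[OF blG] by (intro mult_left_mono) auto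
    finally show "cmod (fderiv g x h) \<le> onorm (fderiv G 0) / (1 - (norm x)^2) * norm h" by simp
  qed
  then show ?thesis using p by (simp add: G_def field_simps)
qed



definition Dphi :: "('a::chilbert \<Rightarrow> 'a) \<Rightarrow> 'a \<Rightarrow> 'a \<Rightarrow> 'a" where
  "Dphi \<phi> z = (SOME L. clinear_map L \<and> (\<phi> has_derivative L) (at z))"

lemma phi_props:
  assumes \<phi>: "analytic_self_map \<phi>" and z: "norm (z::'a::chilbert) < 1"
  shows "norm (\<phi> z) < 1" "clinear_map (Dphi \<phi> z)" "(\<phi> has_derivative Dphi \<phi> z) (at z)"
proof -
  have zi: "z \<in> unit_ball" using z by (simp add: in_unit_ball)
  have "\<phi> z \<in> unit_ball" using \<phi> zi unfolding analytic_self_map_def by blast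
  then show "norm (\<phi> z) < 1" by (simp add: in_unit_ball)
  have "\<exists>L. clinear_map L \<and> (\<phi> has_derivative L) (at z)"
    using \<phi> zi unfolding analytic_self_map_def by blast
  from someI_ex[OF this] show "clinear_map (Dphi \<phi> z)" "(\<phi> has_derivative Dphi \<phi> z) (at z)"
    unfolding Dphi_def by auto
qed

lemma comp_analytic:
  assumes f: "analytic_fun f" and \<phi>: "analytic_self_map \<phi>"
  shows "analytic_fun (f \<circ> \<phi>)"
  unfolding analytic_fun_def
proof
  fix x :: 'a assume "x \<in> unit_ball"
  then have x: "norm x < 1" by (simp add: in_unit_ball)
  have fd: "(f has_derivative fderiv f (\<phi> x)) (at (\<phi> x))" "clinear_functional (fderiv f (\<phi> x))"
    using analytic_deriv[OF f] phi_props(1)[OF \<phi> x] by (auto simp: in_unit_ball)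
  show "\<exists>L. clinear_functional L \<and> ((f \<circ> \<phi>) has_derivative L) (at x)"
    using has_derivative_compose[OF phi_props(3)[OF \<phi> x] fd(1)]
      clinear_functional_compose[OF fd(2) phi_props(2)[OF \<phi> x]]
    by (auto simp: o_def)
qed

lemma schwarz_step:
  assumes f: "analytic_fun f" and \<phi>: "analytic_self_map \<phi>" and x: "norm (x::'a::chilbert) < 1"
  shows "onorm (fderiv ((f \<circ> \<phi>) \<circ> mobius x) 0) \<le> onorm (fderiv (f \<circ> mobius (\<phi> x)) 0)"
proof -
  define b where "b = \<phi> x"
  have b: "norm b < 1" using phi_props(1)[OF \<phi> x] by (simp add: b_def)
  define \<psi> where "\<psi> = (\<lambda>z. mobius b (\<phi> (mobius x z)))"
  define D where "D = (\<lambda>z h. Dmob b (\<phi> (mobius x z)) (Dphi \<phi> (mobius x z) (Dmob x z h)))"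
  have ball: "norm (\<psi> z) < 1" if "norm z < 1" for z
    unfolding \<psi>_def using mob_props(1)[OF b phi_props(1)[OF \<phi> mob_props(1)[OF x that]]] .
  have p0: "\<psi> 0 = 0" by (simp add: \<psi>_def mobius_zero b_def mobius_self)
  have der: "(\<psi> has_derivative D z) (at z) \<and> clinear_map (D z)" if z: "norm z < 1" for z
  proof -
    have m1: "norm (mobius x z) < 1" using mob_props(1)[OF x z] .
    have m2: "norm (\<phi> (mobius x z)) < 1" using phi_props(1)[OF \<phi> m1] .
    have d1: "(mobius x has_derivative Dmob x z) (at z)" using mob_props(3)[OF x z] .
    have d2: "(\<phi> has_derivative Dphi \<phi> (mobius x z)) (at (mobius x z))" using phi_props(3)[OF \<phi> m1] .
    have d3: "(mobius b has_derivative Dmob b (\<phi> (mobius x z))) (at (\<phi> (mobius x z)))"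
      using mob_props(3)[OF b m2] .
    have "(\<psi> has_derivative D z) (at z)"
      unfolding \<psi>_def D_def by (rule has_derivative_compose[OF has_derivative_compose[OF d1 d2] d3])
    moreover have "clinear_map (D z)"
      unfolding D_def
      by (rule clinear_map_compose[OF mob_props(4)[OF b m2] clinear_map_compose[OF phi_props(2)[OF \<phi> m1] mob_props(4)[OF x z]]])
    ultimately show ?thesis by simp
  qed
  define L where "L = (\<lambda>h. fderiv f b (Dmob b 0 h))"
  have Lc: "clinear_functional L"
  proof -
    have "clinear_functional (fderiv f b)" using analytic_deriv(2)[OF f, of b] b by (simp add: in_unit_ball)
    moreover have "clinear_map (Dmob b 0)" using mob_props(4)[OF b, of 0] by simp
    ultimately show ?thesis unfolding L_def by (rule clinear_functional_compose)
  qed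
  have blL: "bounded_linear L" using Lc by (simp add: clinear_functional_def)
  have sch: "cmod (L (D 0 v)) \<le> onorm L * norm v" for v
    by (rule schwarz_functional[OF ball p0 der Lc])
  have Fd: "((f \<circ> mobius b) has_derivative L) (at (\<psi> 0))"
    using comp_mob0(1)[OF f b] p0 by (simp add: L_def)
  have c: "((\<lambda>z. (f \<circ> mobius b) (\<psi> z)) has_derivative (\<lambda>h. L (D 0 h))) (at 0)"
    by (rule has_derivative_compose[OF conjunct1[OF der[of 0]] Fd]) simp
  have eq: "(f \<circ> mobius b) (\<psi> z) = ((f \<circ> \<phi>) \<circ> mobius x) z" if "z \<in> unit_ball" for z
  proof -
    have z: "norm z < 1" using that by (simp add: in_unit_ball)
    have m2: "norm (\<phi> (mobius x z)) < 1" using phi_props(1)[OF \<phi> mob_props(1)[OF x z]] .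
    show ?thesis using mobius_invol[OF b mobius_denom_nz[OF b m2]] by (simp add: \<psi>_def)
  qed
  have "(((f \<circ> \<phi>) \<circ> mobius x) has_derivative (\<lambda>h. L (D 0 h))) (at 0)"
  proof -
    have ob: "open (unit_ball::'a set)" by (simp add: unit_ball_def)
    have zi: "(0::'a) \<in> unit_ball" by (simp add: in_unit_ball)
    show ?thesis by (rule has_derivative_transform_within_open[OF c ob zi eq])
  qed
  then have fd: "fderiv ((f \<circ> \<phi>) \<circ> mobius x) 0 = (\<lambda>h. L (D 0 h))" by (rule fderiv_eq)
  have "onorm (\<lambda>h. L (D 0 h)) \<le> onorm L"
    by (rule Operator_Norm.onorm_bound) (use onorm_pos_le[OF blL] sch in auto)
  moreover have "fderiv (f \<circ> mobius (\<phi> x)) 0 = L" using comp_mob0(2)[OF f b] by (simp add: L_def b_def)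
  ultimately show ?thesis using fd by simp
qed



theorem theorem4p1:
  fixes \<phi> :: "'a::chilbert \<Rightarrow> 'a"
  assumes "analytic_self_map \<phi>"
  shows "\<exists>C. \<forall>f \<in> (bloch_space :: ('a \<Rightarrow> complex) set).
           f \<circ> \<phi> \<in> bloch_space \<and> bloch_norm (f \<circ> \<phi>) \<le> C * bloch_norm f"
proof -
  note \<phi> = assms
  define c where "c = norm (\<phi> 0)"
  have c: "0 \<le> c" "c < 1" using phi_props(1)[OF \<phi>, of 0] by (auto simp: c_def)
  have c2: "1 - c^2 > 0" using c by (simp add: abs_square_less_1)
  define K where "K = c / (1 - c^2)"
  have K0: "K \<ge> 0" using c c2 by (simp add: K_def)
  have ne: "(unit_ball::'a set) \<noteq> {}" using in_unit_ball[of "0::'a"] by auto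
  show ?thesis
  proof (intro exI ballI conjI)
    fix f :: "'a \<Rightarrow> complex"
    assume "f \<in> bloch_space"
    then have fA: "analytic_fun f"
      and bdd: "bdd_above ((\<lambda>x. (1 - (norm x)\<^sup>2) * onorm (fderiv f x)) ` unit_ball)"
      by (auto simp: bloch_space_def)
    obtain M where M: "\<And>x. norm x < 1 \<Longrightarrow> (1 - (norm x)\<^sup>2) * onorm (fderiv f x) \<le> M"
      using bdd unfolding bdd_above_def in_unit_ball[symmetric] by blast
    have invb: "onorm (fderiv (f \<circ> mobius a) 0) \<le> 33 * M" if "norm a < 1" for a
      using inv_bound[OF fA M that] comp_mob0(2)[OF fA that] by simp
    have bddI: "bdd_above ((\<lambda>a. onorm (fderiv (f \<circ> mobius a) 0)) ` unit_ball)"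
      unfolding bdd_above_def using invb in_unit_ball by blast
    have upper: "onorm (fderiv (f \<circ> mobius a) 0) \<le> inv_seminorm f" if "norm a < 1" for a
      unfolding inv_seminorm_def
      by (rule cSUP_upper[OF _ bddI]) (use that in \<open>simp add: in_unit_ball\<close>)
    have inv0: "0 \<le> inv_seminorm f"
    proof -
      have "bounded_linear (fderiv (f \<circ> mobius 0) 0)"
        using has_derivative_bounded_linear[OF comp_mob0(1)[OF fA, of 0]] comp_mob0(2)[OF fA, of 0] by simp
      then show ?thesis using upper[of 0] onorm_pos_le by fastforce
    qed
    have gA: "analytic_fun (f \<circ> \<phi>)" by (rule comp_analytic[OF fA \<phi>])
    have key: "onorm (fderiv ((f \<circ> \<phi>) \<circ> mobius x) 0) \<le> inv_seminorm f" if "norm x < 1" for x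
      using schwarz_step[OF fA \<phi> that] upper[OF phi_props(1)[OF \<phi> that]] by linarith
    show "f \<circ> \<phi> \<in> bloch_space"
      unfolding bloch_space_def
    proof (intro CollectI conjI gA)
      show "bdd_above ((\<lambda>x. (1 - (norm x)\<^sup>2) * onorm (fderiv (f \<circ> \<phi>) x)) ` unit_ball)"
        unfolding bdd_above_def
      proof (intro exI ballI, elim imageE)
        fix y :: real and x :: 'a assume y: "y = (1 - (norm x)\<^sup>2) * onorm (fderiv (f \<circ> \<phi>) x)" and x: "x \<in> unit_ball"
        then have xb: "norm x < 1" by (simp add: in_unit_ball)
        show "y \<le> inv_seminorm f" using lower_bound[OF gA xb] key[OF xb] y by linarith
      qed
    qed
    have inv_le: "inv_seminorm (f \<circ> \<phi>) \<le> inv_seminorm f"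
      unfolding inv_seminorm_def[of "f \<circ> \<phi>"]
      by (rule cSUP_least[OF ne]) (use key in \<open>simp add: in_unit_ball\<close>)
    have fphi: "cmod (f (\<phi> 0) - f 0) \<le> K * inv_seminorm f"
    proof -
      define S where "S = closed_segment (0::'a) (\<phi> 0)"
      have Sn: "norm p \<le> c" if "p \<in> S" for p
      proof -
        have "\<exists>u. 0 \<le> u \<and> u \<le> 1 \<and> p = u *\<^sub>R \<phi> 0"
          using that unfolding S_def closed_segment_def by auto
        then obtain u where u: "0 \<le> u" "u \<le> 1" "p = u *\<^sub>R \<phi> 0" by blast
        have "norm p = u * c" unfolding c_def u(3) using u(1) by simp
        also have "\<dots> \<le> 1 * c" by (rule mult_right_mono[OF u(2) c(1)])
        finally show ?thesis by simp
      qed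
      have Sb: "norm p < 1" if "p \<in> S" for p using Sn[OF that] c by simp
      have derS: "(f has_derivative fderiv f p) (at p within S)" if "p \<in> S" for p
        using analytic_deriv(1)[OF fA] Sb[OF that] by (simp add: in_unit_ball has_derivative_at_withinI)
      have onS: "onorm (fderiv f p) \<le> inv_seminorm f / (1 - c^2)" if "p \<in> S" for p
      proof -
        have pb: "norm p < 1" by (rule Sb[OF that])
        have "(norm p)^2 \<le> c^2" by (rule power_mono[OF Sn[OF that] norm_ge_zero])
        then have q: "1 - (norm p)^2 \<ge> 1 - c^2" by linarith
        have "(1 - (norm p)^2) * onorm (fderiv f p) \<le> inv_seminorm f"
          using lower_bound[OF fA pb] upper[OF pb] by linarith
        moreover have "(1 - c^2) * onorm (fderiv f p) \<le> (1 - (norm p)^2) * onorm (fderiv f p)"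
        proof (rule mult_right_mono[OF q])
          have "clinear_functional (fderiv f p)" using analytic_deriv(2)[OF fA] pb by (simp add: in_unit_ball)
          then show "0 \<le> onorm (fderiv f p)" using onorm_pos_le by (auto simp: clinear_functional_def)
        qed
        ultimately have "(1 - c^2) * onorm (fderiv f p) \<le> inv_seminorm f" by linarith
        then show ?thesis using c2 by (simp add: field_simps)
      qed
      have cS: "convex S" by (simp add: S_def)
      have "cmod (f (\<phi> 0) - f 0) \<le> inv_seminorm f / (1 - c^2) * norm (\<phi> 0 - 0)"
        by (rule differentiable_bound[OF cS derS onS]) (auto simp: S_def)
      then show ?thesis by (simp add: K_def c_def ac_simps)
    qed
    have "bloch_norm (f \<circ> \<phi>) = cmod (f (\<phi> 0)) + inv_seminorm (f \<circ> \<phi>)"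
      by (simp add: bloch_norm_def)
    also have "\<dots> \<le> cmod (f 0) + K * inv_seminorm f + inv_seminorm f"
    proof -
      have "cmod (f (\<phi> 0)) \<le> cmod (f 0) + cmod (f (\<phi> 0) - f 0)"
        by (metis add.commute diff_add_cancel norm_triangle_ineq)
      then show ?thesis using fphi inv_le by linarith
    qed
    also have "\<dots> \<le> (1 + K) * bloch_norm f"
      using K0 inv0 by (simp add: bloch_norm_def algebra_simps)
    finally show "bloch_norm (f \<circ> \<phi>) \<le> (1 + K) * bloch_norm f" .
  qed
qed


end
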